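(* Any quantum algorithm which estimates the distances of a metric space of $n$ points (given by oracle access to the distances) within a constant approximation factor has query complexity at least $\Omega(n^{3/2})$.
   Context: Estimating within approximation factor $\alpha$ means outputting an $n\times n$ matrix $A$ with $d(p_i,p_j)\le A[i][j]\le \alpha\,d(p_i,p_j)$ for all $i,j$, where the distances are available only via an oracle returning $d(p_i,p_j)$ on input $(i,j)$. *)

theory Defs
  imports Complex_Main
begin

text \<open>The distances
are natural numbers below m (the oracle's answer register is Z_m).  The Hilbert space
has the computational basis of tuples (i,j,b,w) with i,j<n (query register),
b<m (answer register), w<W (workspace), encoded as a single index k < n*n*m*W.\<close>

definition qdim :: "nat \<Rightarrow> nat \<Rightarrow> nat \<Rightarrow> nat" where
  "qdim n m W = n * n * m * W"

definition dec_w :: "nat \<Rightarrow> nat \<Rightarrow> nat \<Rightarrow> nat \<Rightarrow> nat" where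
  "dec_w n m W k = k mod W"
definition dec_b :: "nat \<Rightarrow> nat \<Rightarrow> nat \<Rightarrow> nat \<Rightarrow> nat" where
  "dec_b n m W k = (k div W) mod m"
definition dec_j :: "nat \<Rightarrow> nat \<Rightarrow> nat \<Rightarrow> nat \<Rightarrow> nat" where
  "dec_j n m W k = (k div (W * m)) mod n"
definition dec_i :: "nat \<Rightarrow> nat \<Rightarrow> nat \<Rightarrow> nat \<Rightarrow> nat" where
  "dec_i n m W k = k div (W * m * n)"

definition enc :: "nat \<Rightarrow> nat \<Rightarrow> nat \<Rightarrow> nat \<Rightarrow> nat \<Rightarrow> nat \<Rightarrow> nat \<Rightarrow> nat" where
  "enc n m W i j b w = ((i * n + j) * m + b) * W + w"

definition mat_vec :: "nat \<Rightarrow> (nat \<Rightarrow> nat \<Rightarrow> complex) \<Rightarrow> (nat \<Rightarrow> complex) \<Rightarrow> (nat \<Rightarrow> complex)" where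
  "mat_vec D M v = (\<lambda>r. \<Sum>c<D. M r c * v c)"

definition is_unitary :: "nat \<Rightarrow> (nat \<Rightarrow> nat \<Rightarrow> complex) \<Rightarrow> bool" where
  "is_unitary D M \<longleftrightarrow>
     (\<forall>r<D. \<forall>r'<D. (\<Sum>k<D. M r k * cnj (M r' k)) = (if r = r' then 1 else 0))"

definition oracle_shift :: "nat \<Rightarrow> nat \<Rightarrow> nat \<Rightarrow> (nat \<Rightarrow> nat \<Rightarrow> nat) \<Rightarrow> nat \<Rightarrow> nat" where
  "oracle_shift n m W d k =
     (let i = dec_i n m W k; j = dec_j n m W k; b = dec_b n m W k; w = dec_w n m W k
      in enc n m W i j ((b + d i j) mod m) w)"

definition oracle_mat :: "nat \<Rightarrow> nat \<Rightarrow> nat \<Rightarrow> (nat \<Rightarrow> nat \<Rightarrow> nat) \<Rightarrow> nat \<Rightarrow> nat \<Rightarrow> complex" where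
  "oracle_mat n m W d r c = (if r = oracle_shift n m W d c then 1 else 0)"

definition basis_vec :: "nat \<Rightarrow> nat \<Rightarrow> complex" where
  "basis_vec k = (\<lambda>r. if r = k then 1 else 0)"

fun run :: "nat \<Rightarrow> nat \<Rightarrow> nat \<Rightarrow> (nat \<Rightarrow> nat \<Rightarrow> nat) \<Rightarrow> (nat \<Rightarrow> nat \<Rightarrow> nat \<Rightarrow> complex)
            \<Rightarrow> nat \<Rightarrow> (nat \<Rightarrow> complex)" where
  "run n m W d U 0 = mat_vec (qdim n m W) (U 0) (basis_vec 0)"
| "run n m W d U (Suc t) =
     mat_vec (qdim n m W) (U (Suc t))
       (mat_vec (qdim n m W) (oracle_mat n m W d) (run n m W d U t))"

definition success_prob ::
  "nat \<Rightarrow> nat \<Rightarrow> nat \<Rightarrow> (nat \<Rightarrow> nat \<Rightarrow> nat) \<Rightarrow> (nat \<Rightarrow> nat \<Rightarrow> nat \<Rightarrow> complex) \<Rightarrow> nat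
     \<Rightarrow> (nat \<Rightarrow> (nat \<Rightarrow> nat \<Rightarrow> real)) \<Rightarrow> ((nat \<Rightarrow> nat \<Rightarrow> real) \<Rightarrow> bool) \<Rightarrow> real" where
  "success_prob n m W d U T out good =
     (\<Sum>k<qdim n m W. if good (out k) then (cmod (run n m W d U T k))\<^sup>2 else 0)"

definition is_metric_bounded :: "nat \<Rightarrow> nat \<Rightarrow> (nat \<Rightarrow> nat \<Rightarrow> nat) \<Rightarrow> bool" where
  "is_metric_bounded n m d \<longleftrightarrow>
     (\<forall>i<n. d i i = 0) \<and>
     (\<forall>i<n. \<forall>j<n. i \<noteq> j \<longrightarrow> 0 < d i j) \<and>
     (\<forall>i<n. \<forall>j<n. d i j = d j i) \<and>
     (\<forall>i<n. \<forall>j<n. \<forall>k<n. d i k \<le> d i j + d j k) \<and>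
     (\<forall>i<n. \<forall>j<n. d i j < m)"

definition estimates :: "real \<Rightarrow> nat \<Rightarrow> (nat \<Rightarrow> nat \<Rightarrow> nat) \<Rightarrow> (nat \<Rightarrow> nat \<Rightarrow> real) \<Rightarrow> bool" where
  "estimates \<alpha> n d A \<longleftrightarrow>
     (\<forall>i<n. \<forall>j<n. real (d i j) \<le> A i j \<and> A i j \<le> \<alpha> * real (d i j))"

end

theory Submission
  imports Defs "Jordan_Normal_Form.Determinant" "HOL-Analysis.L2_Norm" "HOL-Combinatorics.Permutations"
begin

definition ip :: "nat \<Rightarrow> (nat \<Rightarrow> complex) \<Rightarrow> (nat \<Rightarrow> complex) \<Rightarrow> complex" where
  "ip D u v = (\<Sum>k<D. u k * cnj (v k))"

lemma col_orth:
  assumes U: "is_unitary D M" and c: "c < D" and c': "c' < D"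
  shows "(\<Sum>r<D. cnj (M r c) * M r c') = (if c = c' then 1 else 0)"
proof -
  define A where "A = mat D D (\<lambda>(r,c). M r c)"
  define B where "B = mat D D (\<lambda>(r,c). cnj (M c r))"
  have Ac: "A \<in> carrier_mat D D" and Bc: "B \<in> carrier_mat D D" unfolding A_def B_def by auto
  have "A * B = 1\<^sub>m D"
  proof (rule eq_matI)
    fix i j assume i: "i < dim_row (1\<^sub>m D)" and j: "j < dim_col (1\<^sub>m D)"
    have "(A * B) $$ (i, j) = (\<Sum>k<D. M i k * cnj (M j k))"
      using i j unfolding A_def B_def by (simp add: scalar_prod_def lessThan_atLeast0)
    also have "\<dots> = (if i = j then 1 else 0)" using U i j unfolding is_unitary_def by simp
    finally show "(A * B) $$ (i, j) = 1\<^sub>m D $$ (i, j)" using i j by simp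
  qed (auto simp: A_def B_def)
  then have BA: "B * A = 1\<^sub>m D" using mat_mult_left_right_inverse[OF Ac Bc] by blast
  have "(B * A) $$ (c, c') = (\<Sum>r<D. cnj (M r c) * M r c')"
    using c c' unfolding A_def B_def by (simp add: scalar_prod_def lessThan_atLeast0)
  then show ?thesis using BA c c' by simp
qed

lemma col_orth':
  assumes U: "is_unitary D M" and c: "c < D" and c': "c' < D"
  shows "(\<Sum>r<D. M r c * cnj (M r c')) = (if c = c' then 1 else 0)"
proof -
  have "(\<Sum>r<D. M r c * cnj (M r c')) = cnj (\<Sum>r<D. cnj (M r c) * M r c')"
    by (simp add: mult.commute)
  also have "\<dots> = (if c = c' then 1 else 0)" using col_orth[OF assms] by simp
  finally show ?thesis .
qed

lemma unitary_ip:
  assumes U: "is_unitary D M"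
  shows "ip D (mat_vec D M u) (mat_vec D M v) = ip D u v"
proof -
  have "ip D (mat_vec D M u) (mat_vec D M v) =
        (\<Sum>r<D. \<Sum>c<D. \<Sum>c'<D. (u c * cnj (v c')) * (M r c * cnj (M r c')))"
    unfolding ip_def mat_vec_def
  proof (rule sum.cong[OF refl])
    fix r
    show "(\<Sum>c<D. M r c * u c) * cnj (\<Sum>c'<D. M r c' * v c') =
        (\<Sum>c<D. \<Sum>c'<D. (u c * cnj (v c')) * (M r c * cnj (M r c')))"
      by (simp add: cnj_sum sum_product mult_ac)
  qed
  also have "\<dots> = (\<Sum>c<D. \<Sum>c'<D. \<Sum>r<D. (u c * cnj (v c')) * (M r c * cnj (M r c')))"
    by (subst sum.swap) (rule sum.cong[OF refl], subst sum.swap, rule refl)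
  also have "\<dots> = (\<Sum>c<D. \<Sum>c'<D. (u c * cnj (v c')) * (if c = c' then 1 else 0))"
    by (intro sum.cong refl) (simp add: sum_distrib_left[symmetric] col_orth'[OF U])
  also have "\<dots> = ip D u v" unfolding ip_def by (simp add: if_distrib cong: if_cong)
  finally show ?thesis .
qed


lemma modcanc: assumes "(b::nat) < m" "b' < m" "(b + e) mod m = (b' + e) mod m" shows "b = b'"
proof -
  have "int (b + e) mod int m = int (b' + e) mod int m" using assms(3) by (metis of_nat_mod)
  hence "(int b + int e) mod int m = (int b' + int e) mod int m" by simp
  hence "(int b + int e - int e) mod int m = (int b' + int e - int e) mod int m"
    by (rule mod_diff_cong) simp
  hence "int b mod int m = int b' mod int m" by simp
  thus ?thesis using assms(1,2) by (simp add: zmod_int[symmetric])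
qed

definition blk :: "nat \<Rightarrow> nat \<Rightarrow> nat \<Rightarrow> nat \<Rightarrow> nat \<times> nat" where "blk n m W k = (dec_i n m W k, dec_j n m W k)"

definition Pr :: "nat \<Rightarrow> nat \<Rightarrow> nat \<Rightarrow> (nat \<times> nat) set \<Rightarrow> (nat \<Rightarrow> complex) \<Rightarrow> nat \<Rightarrow> complex" where
  "Pr n m W S u = (\<lambda>k. if blk n m W k \<in> S then u k else 0)"

context
  fixes n m W :: nat
  assumes pos: "0 < n" "0 < m" "0 < W"
begin

lemma dec_bounds:
  assumes "k < qdim n m W"
  shows "dec_i n m W k < n" "dec_j n m W k < n" "dec_b n m W k < m" "dec_w n m W k < W"
proof -
  have k: "k < W * m * n * n" using assms by (simp add: qdim_def mult_ac)
  show "dec_i n m W k < n" unfolding dec_i_def using k pos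
    by (simp add: div_less_iff_less_mult mult_ac)
  show "dec_j n m W k < n" unfolding dec_j_def using pos by simp
  show "dec_b n m W k < m" unfolding dec_b_def using pos by simp
  show "dec_w n m W k < W" unfolding dec_w_def using pos by simp
qed

lemma enc_dec: "enc n m W (dec_i n m W k) (dec_j n m W k) (dec_b n m W k) (dec_w n m W k) = k"
proof -
  have "k = (k div W) * W + k mod W" by simp
  moreover have "k div W = (k div (W*m)) * m + (k div W) mod m"
    by (simp add: div_mult2_eq)
  moreover have "k div (W*m) = (k div (W*m*n)) * n + (k div (W*m)) mod n"
    by (simp add: div_mult2_eq)
  ultimately show ?thesis unfolding enc_def dec_i_def dec_j_def dec_b_def dec_w_def
    by (metis add.commute)
qed

lemma dec_enc:
  assumes "j < n" "b < m" "w < W"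
  shows "dec_i n m W (enc n m W i j b w) = i" "dec_j n m W (enc n m W i j b w) = j"
    "dec_b n m W (enc n m W i j b w) = b" "dec_w n m W (enc n m W i j b w) = w"
proof -
  have 1: "enc n m W i j b w div W = (i * n + j) * m + b" unfolding enc_def using assms by simp
  have 2: "enc n m W i j b w div (W * m) = i * n + j"
    using 1 assms by (simp add: div_mult2_eq)
  have 3: "enc n m W i j b w div (W * m * n) = i"
    using 2 assms by (simp add: div_mult2_eq)
  show "dec_w n m W (enc n m W i j b w) = w" unfolding dec_w_def enc_def using assms by simp
  show "dec_b n m W (enc n m W i j b w) = b" unfolding dec_b_def using 1 assms by simp
  show "dec_j n m W (enc n m W i j b w) = j" unfolding dec_j_def using 2 assms by simp
  show "dec_i n m W (enc n m W i j b w) = i" unfolding dec_i_def using 3 by simp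
qed

lemma enc_bound:
  assumes "i < n" "j < n" "b < m" "w < W"
  shows "enc n m W i j b w < qdim n m W"
proof -
  have "i * n + j < n * n"
  proof -
    have "i * n + j < i * n + n" using assms by simp
    also have "\<dots> = (i + 1) * n" by simp
    also have "\<dots> \<le> n * n" using assms by (intro mult_right_mono) auto
    finally show ?thesis .
  qed
  hence a: "i * n + j + 1 \<le> n * n" by simp
  have "(i * n + j) * m + b + 1 \<le> (i * n + j) * m + m" using assms by simp
  also have "\<dots> = (i * n + j + 1) * m" by simp
  also have "\<dots> \<le> n * n * m" using a by (intro mult_right_mono) auto
  finally have b: "(i * n + j) * m + b + 1 \<le> n * n * m" .
  have "enc n m W i j b w + 1 \<le> ((i * n + j) * m + b) * W + W" unfolding enc_def using assms by simp
  also have "\<dots> = ((i * n + j) * m + b + 1) * W" by simp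
  also have "\<dots> \<le> n * n * m * W" using b by (intro mult_right_mono) auto
  finally show ?thesis unfolding qdim_def by simp
qed


lemma shift_bound: "c < qdim n m W \<Longrightarrow> oracle_shift n m W d c < qdim n m W"
  unfolding oracle_shift_def Let_def
  by (intro enc_bound) (auto simp: dec_bounds pos)

lemma shift_blk: "c < qdim n m W \<Longrightarrow> blk n m W (oracle_shift n m W d c) = blk n m W c"
  unfolding oracle_shift_def Let_def blk_def
  by (simp add: dec_enc dec_bounds pos)

lemma shift_inj: "inj_on (oracle_shift n m W d) {..<qdim n m W}"
proof (rule inj_onI)
  fix c c' assume c: "c \<in> {..<qdim n m W}" and c': "c' \<in> {..<qdim n m W}"
    and eq: "oracle_shift n m W d c = oracle_shift n m W d c'"
  let ?s = "oracle_shift n m W d"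
  have bc: "dec_i n m W c < n" "dec_j n m W c < n" "dec_b n m W c < m" "dec_w n m W c < W"
    using c by (auto simp: dec_bounds)
  have bc': "dec_i n m W c' < n" "dec_j n m W c' < n" "dec_b n m W c' < m" "dec_w n m W c' < W"
    using c' by (auto simp: dec_bounds)
  have e1: "dec_i n m W (?s c) = dec_i n m W c" "dec_j n m W (?s c) = dec_j n m W c"
     "dec_b n m W (?s c) = (dec_b n m W c + d (dec_i n m W c) (dec_j n m W c)) mod m"
     "dec_w n m W (?s c) = dec_w n m W c"
    unfolding oracle_shift_def Let_def using bc pos by (simp_all add: dec_enc)
  have e2: "dec_i n m W (?s c') = dec_i n m W c'" "dec_j n m W (?s c') = dec_j n m W c'"
     "dec_b n m W (?s c') = (dec_b n m W c' + d (dec_i n m W c') (dec_j n m W c')) mod m"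
     "dec_w n m W (?s c') = dec_w n m W c'"
    unfolding oracle_shift_def Let_def using bc' pos by (simp_all add: dec_enc)
  have i: "dec_i n m W c = dec_i n m W c'" and j: "dec_j n m W c = dec_j n m W c'"
    and w: "dec_w n m W c = dec_w n m W c'"
    using e1 e2 eq by metis+
  have "(dec_b n m W c + d (dec_i n m W c) (dec_j n m W c)) mod m =
        (dec_b n m W c' + d (dec_i n m W c) (dec_j n m W c)) mod m"
    using e1(3) e2(3) eq i j by metis
  hence b: "dec_b n m W c = dec_b n m W c'" using modcanc bc(3) bc'(3) by blast
  show "c = c'" using enc_dec[of c] enc_dec[of c'] i j b w by metis
qed

lemma shift_surj: "oracle_shift n m W d ` {..<qdim n m W} = {..<qdim n m W}"
  by (rule endo_inj_surj) (auto simp: shift_bound shift_inj)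

lemma shift_unique:
  assumes r: "r < qdim n m W"
  obtains c where "c < qdim n m W" "\<And>k. k < qdim n m W \<Longrightarrow> (r = oracle_shift n m W d k) = (k = c)"
proof -
  from r shift_surj obtain c where c: "c < qdim n m W" "r = oracle_shift n m W d c"
    by (metis imageE lessThan_iff)
  show ?thesis
    by (rule that[OF c(1)]) (use c shift_inj in \<open>auto simp: inj_on_def\<close>)
qed

lemma oracle_unitary: "is_unitary (qdim n m W) (oracle_mat n m W d)"
  unfolding is_unitary_def
proof (intro allI impI)
  fix r r' assume r: "r < qdim n m W" and r': "r' < qdim n m W"
  obtain c where c: "c < qdim n m W"
    and cu: "\<And>k. k < qdim n m W \<Longrightarrow> (r = oracle_shift n m W d k) = (k = c)"
    using shift_unique[OF r] by blast
  have "(\<Sum>k<qdim n m W. oracle_mat n m W d r k * cnj (oracle_mat n m W d r' k)) =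
        (\<Sum>k<qdim n m W. if k = c then (if r' = oracle_shift n m W d k then 1 else 0) else 0)"
    by (intro sum.cong refl) (auto simp: oracle_mat_def cu)
  also have "\<dots> = (if r' = oracle_shift n m W d c then 1 else 0)"
    using c by simp
  also have "\<dots> = (if r = r' then 1 else 0)" using cu[OF c] by auto
  finally show "(\<Sum>k<qdim n m W. oracle_mat n m W d r k * cnj (oracle_mat n m W d r' k)) =
        (if r = r' then 1 else 0)" .
qed

lemma oracle_Pr:
  "mat_vec (qdim n m W) (oracle_mat n m W d) (Pr n m W S u) = Pr n m W S (mat_vec (qdim n m W) (oracle_mat n m W d) u)"
proof
  fix r
  show "mat_vec (qdim n m W) (oracle_mat n m W d) (Pr n m W S u) r = Pr n m W S (mat_vec (qdim n m W) (oracle_mat n m W d) u) r"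
  proof (cases "blk n m W r \<in> S")
    case True
    show ?thesis unfolding mat_vec_def Pr_def oracle_mat_def using True
      by (auto intro!: sum.cong simp: shift_blk)
  next
    case False
    have "(\<Sum>c<qdim n m W. oracle_mat n m W d r c * Pr n m W S u c) = 0"
      unfolding Pr_def oracle_mat_def using False
      by (intro sum.neutral) (auto simp: shift_blk)
    thus ?thesis unfolding mat_vec_def using False by (simp add: Pr_def)
  qed
qed

lemma oracle_agree:
  assumes "\<And>i j. (i, j) \<in> R \<Longrightarrow> d1 i j = d2 i j"
  shows "mat_vec (qdim n m W) (oracle_mat n m W d1) (Pr n m W R u) = mat_vec (qdim n m W) (oracle_mat n m W d2) (Pr n m W R u)"
proof
  fix r
  have "\<And>c. blk n m W c \<in> R \<Longrightarrow> oracle_shift n m W d1 c = oracle_shift n m W d2 c"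
    using assms unfolding oracle_shift_def blk_def Let_def by simp
  then show "mat_vec (qdim n m W) (oracle_mat n m W d1) (Pr n m W R u) r = mat_vec (qdim n m W) (oracle_mat n m W d2) (Pr n m W R u) r"
    unfolding mat_vec_def Pr_def oracle_mat_def by (intro sum.cong refl) auto
qed

end

definition nsq :: "nat \<Rightarrow> (nat \<Rightarrow> complex) \<Rightarrow> real" where
  "nsq D u = (\<Sum>k<D. (cmod (u k))\<^sup>2)"

lemma nsq_nonneg: "0 \<le> nsq D u" unfolding nsq_def by (simp add: sum_nonneg)

lemma ip_self: "ip D u u = complex_of_real (nsq D u)"
  unfolding ip_def nsq_def of_real_sum by (intro sum.cong refl) (metis complex_norm_square)

lemma cs: "cmod (ip D u v) \<le> sqrt (nsq D u) * sqrt (nsq D v)"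
proof -
  have "cmod (ip D u v) \<le> (\<Sum>k<D. cmod (u k * cnj (v k)))"
    unfolding ip_def by (rule norm_sum)
  also have "\<dots> = (\<Sum>k<D. \<bar>cmod (u k)\<bar> * \<bar>cmod (v k)\<bar>)" by (simp add: norm_mult)
  also have "\<dots> \<le> L2_set (\<lambda>k. cmod (u k)) {..<D} * L2_set (\<lambda>k. cmod (v k)) {..<D}"
    by (rule L2_set_mult_ineq)
  also have "\<dots> = sqrt (nsq D u) * sqrt (nsq D v)" unfolding L2_set_def nsq_def by simp
  finally show ?thesis .
qed

lemma nsq_unitary: "is_unitary D M \<Longrightarrow> nsq D (mat_vec D M u) = nsq D u"
  using unitary_ip[of D M u u] by (simp add: ip_self)

lemma ip3:
  assumes "H \<inter> L = {}"
  shows "ip (qdim n m W) u v = ip (qdim n m W) (Pr n m W H u) (Pr n m W H v)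
     + ip (qdim n m W) (Pr n m W L u) (Pr n m W L v)
     + ip (qdim n m W) (Pr n m W (- (H \<union> L)) u) (Pr n m W (- (H \<union> L)) v)"
  unfolding ip_def sum.distrib[symmetric]
  by (intro sum.cong refl) (use assms in \<open>auto simp: Pr_def\<close>)

lemma oracle_step:
  assumes pos: "0 < n" "0 < m" "0 < W" and HL: "H \<inter> L = {}"
    and agree: "\<And>i j. (i, j) \<notin> H \<union> L \<Longrightarrow> d1 i j = d2 i j"
  shows "cmod (ip (qdim n m W) (mat_vec (qdim n m W) (oracle_mat n m W d1) u)
                              (mat_vec (qdim n m W) (oracle_mat n m W d2) v) - ip (qdim n m W) u v)
    \<le> 2 * (sqrt (nsq (qdim n m W) (Pr n m W H u)) * sqrt (nsq (qdim n m W) (Pr n m W H v)))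
      + 2 * (sqrt (nsq (qdim n m W) (Pr n m W L u)) * sqrt (nsq (qdim n m W) (Pr n m W L v)))"
proof -
  let ?D = "qdim n m W"
  let ?O1 = "mat_vec ?D (oracle_mat n m W d1)" and ?O2 = "mat_vec ?D (oracle_mat n m W d2)"
  let ?R = "- (H \<union> L)"
  let ?P = "Pr n m W"
  have U1: "is_unitary ?D (oracle_mat n m W d1)" using oracle_unitary pos by blast
  have U2: "is_unitary ?D (oracle_mat n m W d2)" using oracle_unitary pos by blast
  have e1: "ip ?D (?O1 u) (?O2 v) = ip ?D (?O1 (?P H u)) (?O2 (?P H v)) + ip ?D (?O1 (?P L u)) (?O2 (?P L v))
            + ip ?D (?O1 (?P ?R u)) (?O2 (?P ?R v))"
    using ip3[OF HL, of n m W "?O1 u" "?O2 v"] by (simp add: oracle_Pr[OF pos])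
  have "?O2 (?P ?R v) = ?O1 (?P ?R v)"
    by (rule oracle_agree[OF pos, symmetric]) (use agree in auto)
  hence e2: "ip ?D (?O1 (?P ?R u)) (?O2 (?P ?R v)) = ip ?D (?P ?R u) (?P ?R v)"
    using unitary_ip[OF U1] by simp
  have e3: "ip ?D u v = ip ?D (?P H u) (?P H v) + ip ?D (?P L u) (?P L v) + ip ?D (?P ?R u) (?P ?R v)"
    by (rule ip3[OF HL])
  have "ip ?D (?O1 u) (?O2 v) - ip ?D u v =
     (ip ?D (?O1 (?P H u)) (?O2 (?P H v)) - ip ?D (?P H u) (?P H v)) +
     (ip ?D (?O1 (?P L u)) (?O2 (?P L v)) - ip ?D (?P L u) (?P L v))"
    using e1 e2 e3 by simp
  hence "cmod (ip ?D (?O1 u) (?O2 v) - ip ?D u v) \<le>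
     cmod (ip ?D (?O1 (?P H u)) (?O2 (?P H v)) - ip ?D (?P H u) (?P H v)) +
     cmod (ip ?D (?O1 (?P L u)) (?O2 (?P L v)) - ip ?D (?P L u) (?P L v))"
    by (simp only: norm_triangle_ineq)
  also have "\<dots> \<le>
     (cmod (ip ?D (?O1 (?P H u)) (?O2 (?P H v))) + cmod (ip ?D (?P H u) (?P H v))) +
     (cmod (ip ?D (?O1 (?P L u)) (?O2 (?P L v))) + cmod (ip ?D (?P L u) (?P L v)))"
    by (intro add_mono norm_triangle_ineq4)
  also have "\<dots> \<le> 2 * (sqrt (nsq ?D (?P H u)) * sqrt (nsq ?D (?P H v)))
      + 2 * (sqrt (nsq ?D (?P L u)) * sqrt (nsq ?D (?P L v)))"
    using cs[of ?D "?O1 (?P H u)" "?O2 (?P H v)"] cs[of ?D "?P H u" "?P H v"]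
      cs[of ?D "?O1 (?P L u)" "?O2 (?P L v)"] cs[of ?D "?P L u" "?P L v"]
    by (simp add: nsq_unitary[OF U1] nsq_unitary[OF U2])
  finally show ?thesis .
qed


definition edge :: "nat \<Rightarrow> (nat \<Rightarrow> nat) \<Rightarrow> nat \<Rightarrow> nat \<Rightarrow> bool" where
  "edge h \<sigma> i j \<longleftrightarrow> (i < h \<and> j = h + \<sigma> i) \<or> (j < h \<and> i = h + \<sigma> j)"

definition dist :: "nat \<Rightarrow> nat \<Rightarrow> (nat \<Rightarrow> nat) \<Rightarrow> nat \<Rightarrow> nat \<Rightarrow> nat" where
  "dist h L \<sigma> i j = (if i = j then 0 else if edge h \<sigma> i j then 1 else L)"

definition sw :: "(nat \<Rightarrow> nat) \<Rightarrow> nat \<times> nat \<Rightarrow> nat \<Rightarrow> nat" where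
  "sw \<sigma> p = \<sigma> \<circ> transpose (fst p) (snd p)"

definition Hs :: "nat \<Rightarrow> (nat \<Rightarrow> nat) \<Rightarrow> nat \<times> nat \<Rightarrow> (nat \<times> nat) set" where
  "Hs h \<sigma> p = {(fst p, h + \<sigma> (fst p)), (h + \<sigma> (fst p), fst p),
                (snd p, h + \<sigma> (snd p)), (h + \<sigma> (snd p), snd p)}"

definition Ls :: "nat \<Rightarrow> (nat \<Rightarrow> nat) \<Rightarrow> nat \<times> nat \<Rightarrow> (nat \<times> nat) set" where
  "Ls h \<sigma> p = {(fst p, h + \<sigma> (snd p)), (h + \<sigma> (snd p), fst p),
                (snd p, h + \<sigma> (fst p)), (h + \<sigma> (fst p), snd p)}"

definition Prs :: "nat \<Rightarrow> (nat \<times> nat) set" where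
  "Prs h = {(a1, a2). a1 < h \<and> a2 < h \<and> a1 \<noteq> a2}"

definition Xs :: "nat \<Rightarrow> (nat \<Rightarrow> nat) set" where
  "Xs h = {\<sigma>. \<sigma> permutes {..<h}}"

lemma Xs_range: "\<sigma> \<in> Xs h \<Longrightarrow> a < h \<Longrightarrow> \<sigma> a < h"
  unfolding Xs_def using permutes_in_image[of \<sigma> "{..<h}" a] by auto

lemma Xs_inj: "\<sigma> \<in> Xs h \<Longrightarrow> \<sigma> a = \<sigma> b \<Longrightarrow> a = b"
  unfolding Xs_def using permutes_inj[of \<sigma> "{..<h}"] by (auto simp: inj_def)

lemma sw_perm: "\<sigma> \<in> Xs h \<Longrightarrow> p \<in> Prs h \<Longrightarrow> sw \<sigma> p \<in> Xs h"
  unfolding Xs_def Prs_def sw_def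
  by (auto intro!: permutes_compose permutes_swap_id)

lemma sw_sw: "sw (sw \<sigma> p) p = \<sigma>"
  unfolding sw_def by (simp add: o_assoc[symmetric])

lemma sw_apply: "sw \<sigma> (a, b) a = \<sigma> b" "sw \<sigma> (a, b) b = \<sigma> a"
  "c \<noteq> a \<Longrightarrow> c \<noteq> b \<Longrightarrow> sw \<sigma> (a, b) c = \<sigma> c"
  unfolding sw_def by auto

lemma H_sw: "Hs h (sw \<sigma> p) p = Ls h \<sigma> p"
  by (cases p) (simp add: Hs_def Ls_def sw_apply)

lemma L_sw: "Ls h (sw \<sigma> p) p = Hs h \<sigma> p"
  by (cases p) (simp add: Hs_def Ls_def sw_apply)

lemma HL_disj: assumes "\<sigma> \<in> Xs h" "p \<in> Prs h" shows "Hs h \<sigma> p \<inter> Ls h \<sigma> p = {}"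
proof -
  obtain a b where p: "p = (a, b)" "a < h" "b < h" "a \<noteq> b" using assms(2) unfolding Prs_def by auto
  have "\<sigma> a \<noteq> \<sigma> b" using Xs_inj[OF assms(1)] p by blast
  thus ?thesis using p by (auto simp: Hs_def Ls_def)
qed

lemma agree:
  assumes "\<sigma> \<in> Xs h" "p \<in> Prs h" "(i, j) \<notin> Hs h \<sigma> p \<union> Ls h \<sigma> p"
  shows "dist h L \<sigma> i j = dist h L (sw \<sigma> p) i j"
proof -
  obtain a b where p: "p = (a, b)" "a < h" "b < h" "a \<noteq> b" using assms(2) unfolding Prs_def by auto
  have "edge h \<sigma> i j = edge h (sw \<sigma> p) i j"
    using assms(3) p unfolding edge_def Hs_def Ls_def
    by (cases "i = a"; cases "i = b"; cases "j = a"; cases "j = b") (auto simp: sw_apply)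
  thus ?thesis unfolding dist_def by simp
qed

lemma edge_unique: assumes "\<sigma> \<in> Xs h" "edge h \<sigma> i j" "edge h \<sigma> j k" shows "i = k"
  using assms(2,3) Xs_inj[OF assms(1)] unfolding edge_def by auto

lemma metric:
  assumes "\<sigma> \<in> Xs h" "2 * h \<le> n" "1 \<le> L" "L < m"
  shows "is_metric_bounded n m (dist h L \<sigma>)"
proof -
  have tri: "dist h L \<sigma> i k \<le> dist h L \<sigma> i j + dist h L \<sigma> j k" for i j k
  proof (cases "i = k")
    case True then show ?thesis by (simp add: dist_def)
  next
    case False
    show ?thesis
    proof (cases "i = j \<or> j = k")
      case True then show ?thesis by (auto simp: dist_def)
    next
      case ne: False
      show ?thesis
      proof (cases "edge h \<sigma> i j \<and> edge h \<sigma> j k")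
        case True then show ?thesis using edge_unique[OF assms(1)] False by blast
      next
        case False
        then show ?thesis using ne assms(3) by (auto simp: dist_def)
      qed
    qed
  qed
  have sym: "dist h L \<sigma> i j = dist h L \<sigma> j i" for i j
    unfolding dist_def edge_def by auto
  show ?thesis unfolding is_metric_bounded_def
  proof (intro conjI)
    show "\<forall>i<n. \<forall>j<n. \<forall>k<n. dist h L \<sigma> i k \<le> dist h L \<sigma> i j + dist h L \<sigma> j k"
      using tri by blast
    show "\<forall>i<n. \<forall>j<n. dist h L \<sigma> i j = dist h L \<sigma> j i" using sym by blast
  qed (use assms(3,4) in \<open>auto simp: dist_def\<close>)
qed

lemma distinct_est:
  assumes "\<sigma> \<in> Xs h" "p \<in> Prs h" "2 * h \<le> n" "\<alpha> < real L"
    "estimates \<alpha> n (dist h L \<sigma>) A" "estimates \<alpha> n (dist h L (sw \<sigma> p)) A"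
  shows False
proof -
  obtain a b where p: "p = (a, b)" "a < h" "b < h" "a \<noteq> b" using assms(2) unfolding Prs_def by auto
  have sab: "\<sigma> a \<noteq> \<sigma> b" using Xs_inj[OF assms(1)] p by blast
  have sa: "\<sigma> a < h" using Xs_range[OF assms(1) p(2)] .
  let ?j = "h + \<sigma> a"
  have i: "a < n" "?j < n" using p sa assms(3) by auto
  have d1: "dist h L \<sigma> a ?j = 1" using p(2) unfolding dist_def edge_def by auto
  have d2: "dist h L (sw \<sigma> p) a ?j = L" using p(2) sab unfolding dist_def edge_def p(1)
    by (auto simp: sw_apply)
  from assms(5) i have "A a ?j \<le> \<alpha>" unfolding estimates_def using d1 by force
  moreover from assms(6) i have "real L \<le> A a ?j" unfolding estimates_def using d2 by force
  ultimately show False using assms(4) by simp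
qed

lemma countH:
  assumes "\<sigma> \<in> Xs h"
  shows "card {p \<in> Prs h. q \<in> Hs h \<sigma> p} \<le> 2 * h"
proof -
  obtain i j where q: "q = (i, j)" by (cases q)
  have "{p \<in> Prs h. q \<in> Hs h \<sigma> p} \<subseteq> ({min i j} \<times> {..<h}) \<union> ({..<h} \<times> {min i j})"
    using q unfolding Prs_def Hs_def by auto
  hence "card {p \<in> Prs h. q \<in> Hs h \<sigma> p} \<le> card (({min i j} \<times> {..<h}) \<union> ({..<h} \<times> {min i j}))"
    by (intro card_mono) auto
  also have "\<dots> \<le> card ({min i j} \<times> {..<h}) + card ({..<h} \<times> {min i j})"
    by (rule card_Un_le)
  also have "\<dots> = 2 * h" by (simp add: card_cartesian_product)
  finally show ?thesis .
qed

lemma countL: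
  assumes "\<sigma> \<in> Xs h"
  shows "card {p \<in> Prs h. q \<in> Ls h \<sigma> p} \<le> 2"
proof -
  obtain i j where q: "q = (i, j)" by (cases q)
  let ?a = "min i j" and ?b = "inv_into UNIV \<sigma> (max i j - h)"
  have invs: "inv_into UNIV \<sigma> (\<sigma> x) = x" for x using assms unfolding Xs_def by (simp add: permutes_inverses)
  have "{p \<in> Prs h. q \<in> Ls h \<sigma> p} \<subseteq> {(?a, ?b), (?b, ?a)}"
    using q unfolding Prs_def Ls_def by (auto simp: invs)
  hence "card {p \<in> Prs h. q \<in> Ls h \<sigma> p} \<le> card {(?a, ?b), (?b, ?a)}"
    by (intro card_mono) auto
  also have "\<dots> \<le> 2" by (simp add: card_insert_le_m1)
  finally show ?thesis .
qed

lemma card_Prs: "card (Prs h) = h * h - h"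
proof -
  have "{..<h} \<times> {..<h} = Prs h \<union> (\<lambda>a. (a, a)) ` {..<h}" unfolding Prs_def by auto
  moreover have "Prs h \<inter> (\<lambda>a. (a, a)) ` {..<h} = {}" unfolding Prs_def by auto
  moreover have "finite (Prs h)" unfolding Prs_def
    by (rule finite_subset[of _ "{..<h} \<times> {..<h}"]) auto
  ultimately have "h * h = card (Prs h) + card ((\<lambda>a. (a, a)) ` {..<h})"
    by (metis card_Un_disjoint card_cartesian_product card_lessThan finite_imageI finite_lessThan)
  moreover have "card ((\<lambda>a. (a, a)) ` {..<h}) = h" by (subst card_image) (auto simp: inj_on_def)
  ultimately show ?thesis by simp
qed

lemma finite_Prs: "finite (Prs h)" unfolding Prs_def
  by (rule finite_subset[of _ "{..<h} \<times> {..<h}"]) auto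

lemma finite_Xs: "finite (Xs h)" unfolding Xs_def by (rule finite_permutations) simp

lemma id_Xs: "id \<in> Xs h" unfolding Xs_def by simp


lemma amgm:
  fixes A B s :: real
  assumes "0 \<le> A" "0 \<le> B" "0 < s"
  shows "2 * (sqrt A * sqrt B) \<le> s * A + B / s"
proof -
  define x where "x = sqrt A"
  define y where "y = sqrt B"
  have A: "x\<^sup>2 = A" and B: "y\<^sup>2 = B" using assms unfolding x_def y_def by simp_all
  have "0 \<le> (s * x - y)\<^sup>2" by simp
  hence "2 * s * (x * y) \<le> s * s * x\<^sup>2 + y\<^sup>2" by (simp add: power2_eq_square algebra_simps)
  have p1: "(s * x - y)\<^sup>2 = (s * x)\<^sup>2 + y\<^sup>2 - 2 * (s * x) * y" by (rule power2_diff)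
  have p2: "(s * x)\<^sup>2 = s * s * x\<^sup>2" unfolding power_mult_distrib by (simp add: power2_eq_square)
  have p3: "2 * (s * x) * y = s * (2 * (x * y))" by (simp add: mult_ac)
  have h: "s * (2 * (x * y)) \<le> s * s * x\<^sup>2 + y\<^sup>2" using \<open>0 \<le> (s * x - y)\<^sup>2\<close> p1 p2 p3 by linarith
  have e: "s * (s * x\<^sup>2 + y\<^sup>2 / s) = s * s * x\<^sup>2 + y\<^sup>2" using assms(3) by (simp add: field_simps)
  have "s * (2 * (x * y)) \<le> s * (s * x\<^sup>2 + y\<^sup>2 / s)" using h e by linarith
  hence "2 * (x * y) \<le> s * x\<^sup>2 + y\<^sup>2 / s" using assms(3) by (rule mult_left_le_imp_le)
  thus ?thesis unfolding A B unfolding x_def y_def .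
qed

lemma count_sum:
  assumes P: "finite P" and B: "\<And>q. card {p \<in> P. q \<in> F p} \<le> B"
  shows "(\<Sum>p\<in>P. nsq D (Pr n m W (F p) u)) \<le> real B * nsq D u"
proof -
  have "(\<Sum>p\<in>P. nsq D (Pr n m W (F p) u)) =
        (\<Sum>p\<in>P. \<Sum>k<D. if blk n m W k \<in> F p then (cmod (u k))\<^sup>2 else 0)"
    unfolding nsq_def Pr_def by (intro sum.cong refl) auto
  also have "\<dots> = (\<Sum>k<D. \<Sum>p\<in>P. if blk n m W k \<in> F p then (cmod (u k))\<^sup>2 else 0)"
    by (rule sum.swap)
  also have "\<dots> = (\<Sum>k<D. real (card {p \<in> P. blk n m W k \<in> F p}) * (cmod (u k))\<^sup>2)"
    by (intro sum.cong refl) (simp add: sum.inter_filter[OF P, symmetric])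
  also have "\<dots> \<le> (\<Sum>k<D. real B * (cmod (u k))\<^sup>2)"
    by (intro sum_mono mult_right_mono) (auto simp: B)
  also have "\<dots> = real B * nsq D u" unfolding nsq_def by (simp add: sum_distrib_left)
  finally show ?thesis .
qed

lemma reindex_sw:
  fixes F :: "(nat \<Rightarrow> nat) \<Rightarrow> nat \<times> nat \<Rightarrow> real"
  shows "(\<Sum>\<sigma>\<in>Xs h. \<Sum>p\<in>Prs h. F (sw \<sigma> p) p) = (\<Sum>\<sigma>\<in>Xs h. \<Sum>p\<in>Prs h. F \<sigma> p)"
proof -
  let ?f = "\<lambda>(\<sigma>, p). (sw \<sigma> p, p)"
  have bij: "bij_betw ?f (Xs h \<times> Prs h) (Xs h \<times> Prs h)"
    by (rule bij_betw_byWitness[where f' = ?f]) (auto simp: sw_sw sw_perm)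
  have "(\<Sum>\<sigma>\<in>Xs h. \<Sum>p\<in>Prs h. F (sw \<sigma> p) p) = (\<Sum>x\<in>Xs h \<times> Prs h. (case_prod F) (?f x))"
    by (simp add: sum.cartesian_product split_def)
  also have "\<dots> = (\<Sum>x\<in>Xs h \<times> Prs h. case_prod F x)"
    by (rule sum.reindex_bij_betw[OF bij])
  also have "\<dots> = (\<Sum>\<sigma>\<in>Xs h. \<Sum>p\<in>Prs h. F \<sigma> p)"
    by (simp add: sum.cartesian_product split_def)
  finally show ?thesis .
qed

lemma geo_bound:
  fixes a b :: real
  assumes "2/3 \<le> a" "a \<le> 1" "0 \<le> b" "b \<le> 1/3"
  shows "sqrt (a * b) + sqrt ((1 - a) * (1 - b)) \<le> 19/20"
proof -
  have 1: "sqrt (a * b) \<le> ((7/10) * a + (10/7) * b) / 2"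
  proof -
    have "sqrt (a * b) = sqrt (((7/10) * a) * ((10/7) * b))" by simp
    also have "\<dots> \<le> ((7/10) * a + (10/7) * b) / 2" by (rule arith_geo_mean_sqrt) (use assms in auto)
    finally show ?thesis .
  qed
  have 2: "sqrt ((1 - a) * (1 - b)) \<le> ((10/7) * (1 - a) + (7/10) * (1 - b)) / 2"
  proof -
    have "sqrt ((1 - a) * (1 - b)) = sqrt (((10/7) * (1 - a)) * ((7/10) * (1 - b)))" by (simp add: algebra_simps)
    also have "\<dots> \<le> ((10/7) * (1 - a) + (7/10) * (1 - b)) / 2" by (rule arith_geo_mean_sqrt) (use assms in auto)
    finally show ?thesis .
  qed
  have 3: "((7/10) * a + (10/7) * b) / 2 + ((10/7) * (1 - a) + (7/10) * (1 - b)) / 2 \<le> 19/20"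
    using assms by (simp add: field_simps)
  show ?thesis using 1 2 3 by linarith
qed

lemma final_ip:
  assumes u: "nsq D u = 1" and v: "nsq D v = 1" and G: "G \<subseteq> {..<D}"
    and su: "2/3 \<le> (\<Sum>k\<in>G. (cmod (u k))\<^sup>2)"
    and sv: "2/3 \<le> (\<Sum>k\<in>{..<D} - G. (cmod (v k))\<^sup>2)"
  shows "cmod (ip D u v) \<le> 19/20"
proof -
  let ?C = "{..<D} - G"
  have fin: "finite G" using G finite_subset by blast
  have split: "\<And>f :: nat \<Rightarrow> real. (\<Sum>k<D. f k) = (\<Sum>k\<in>G. f k) + (\<Sum>k\<in>?C. f k)"
    using sum.subset_diff[OF G, of _] by (simp add: add.commute)
  define a where "a = (\<Sum>k\<in>G. (cmod (u k))\<^sup>2)"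
  define b where "b = (\<Sum>k\<in>G. (cmod (v k))\<^sup>2)"
  have a2: "(\<Sum>k\<in>?C. (cmod (u k))\<^sup>2) = 1 - a" using split[of "\<lambda>k. (cmod (u k))\<^sup>2"] u
    unfolding nsq_def a_def by simp
  have b2: "(\<Sum>k\<in>?C. (cmod (v k))\<^sup>2) = 1 - b" using split[of "\<lambda>k. (cmod (v k))\<^sup>2"] v
    unfolding nsq_def b_def by simp
  have a0: "0 \<le> 1 - a" "0 \<le> a" "0 \<le> b" "0 \<le> 1 - b"
  proof -
    show "0 \<le> a" unfolding a_def by (rule sum_nonneg) simp
    show "0 \<le> b" unfolding b_def by (rule sum_nonneg) simp
    have "0 \<le> (\<Sum>k\<in>?C. (cmod (u k))\<^sup>2)" by (rule sum_nonneg) simp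
    thus "0 \<le> 1 - a" using a2 by simp
    have "0 \<le> (\<Sum>k\<in>?C. (cmod (v k))\<^sup>2)" by (rule sum_nonneg) simp
    thus "0 \<le> 1 - b" using b2 by simp
  qed
  have "cmod (ip D u v) \<le> (\<Sum>k<D. \<bar>cmod (u k)\<bar> * \<bar>cmod (v k)\<bar>)"
    unfolding ip_def by (rule order_trans[OF norm_sum]) (simp add: norm_mult)
  also have "\<dots> = (\<Sum>k\<in>G. \<bar>cmod (u k)\<bar> * \<bar>cmod (v k)\<bar>) + (\<Sum>k\<in>?C. \<bar>cmod (u k)\<bar> * \<bar>cmod (v k)\<bar>)"
    by (rule split)
  also have "\<dots> \<le> L2_set (\<lambda>k. cmod (u k)) G * L2_set (\<lambda>k. cmod (v k)) G +
                 L2_set (\<lambda>k. cmod (u k)) ?C * L2_set (\<lambda>k. cmod (v k)) ?C"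
    by (intro add_mono L2_set_mult_ineq)
  also have "\<dots> = sqrt (a * b) + sqrt ((1 - a) * (1 - b))"
    unfolding L2_set_def a2 b2 a_def b_def by (simp add: real_sqrt_mult)
  also have "\<dots> \<le> 19/20"
    by (rule geo_bound) (use su sv a0 b2 a_def in auto)
  finally show ?thesis .
qed


lemma qdim_pos: "0 < n \<Longrightarrow> 0 < m \<Longrightarrow> 0 < W \<Longrightarrow> 0 < qdim n m W"
  unfolding qdim_def by simp

lemma nsq_basis: "0 < D \<Longrightarrow> nsq D (basis_vec 0) = 1"
proof -
  assume D: "0 < D"
  have "nsq D (basis_vec 0) = (\<Sum>k<D. if k = 0 then 1 else 0)"
    unfolding nsq_def basis_vec_def by (intro sum.cong refl) auto
  also have "\<dots> = 1" using D by simp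
  finally show ?thesis .
qed

locale qalg =
  fixes n m W h L :: nat and U :: "nat \<Rightarrow> nat \<Rightarrow> nat \<Rightarrow> complex" and T :: nat
  assumes pos: "0 < n" "0 < m" "0 < W"
    and unit: "\<And>t. t \<le> T \<Longrightarrow> is_unitary (qdim n m W) (U t)"
begin

abbreviation "D \<equiv> qdim n m W"
abbreviation "psi \<sigma> t \<equiv> run n m W (dist h L \<sigma>) U t"
abbreviation "Or d \<equiv> mat_vec D (oracle_mat n m W d)"

lemma run_norm: "t \<le> T \<Longrightarrow> nsq D (run n m W d U t) = 1"
proof (induction t)
  case 0
  have "nsq D (run n m W d U 0) = nsq D (basis_vec 0)"
    by (simp add: nsq_unitary[OF unit])
  also have "\<dots> = 1" by (rule nsq_basis) (rule qdim_pos[OF pos])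
  finally show ?case .
next
  case (Suc t)
  have "nsq D (run n m W d U (Suc t)) = nsq D (Or d (run n m W d U t))"
    using Suc.prems by (simp add: nsq_unitary[OF unit])
  also have "\<dots> = nsq D (run n m W d U t)" by (rule nsq_unitary[OF oracle_unitary[OF pos]])
  also have "\<dots> = 1" using Suc by simp
  finally show ?case .
qed

lemma run_ip: "t < T \<Longrightarrow> ip D (run n m W d1 U (Suc t)) (run n m W d2 U (Suc t))
   = ip D (Or d1 (run n m W d1 U t)) (Or d2 (run n m W d2 U t))"
  using unitary_ip[OF unit[of "Suc t"]] by simp

definition FH :: "nat \<Rightarrow> (nat \<Rightarrow> nat) \<Rightarrow> nat \<times> nat \<Rightarrow> real" where
  "FH t x p = nsq D (Pr n m W (Hs h x p) (psi x t))"
definition FL :: "nat \<Rightarrow> (nat \<Rightarrow> nat) \<Rightarrow> nat \<times> nat \<Rightarrow> real" where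
  "FL t x p = nsq D (Pr n m W (Ls h x p) (psi x t))"

lemma pair_step:
  assumes X: "\<sigma> \<in> Xs h" and P: "p \<in> Prs h" and t: "t < T" and s: "0 < s"
  shows "cmod (ip D (psi \<sigma> t) (psi (sw \<sigma> p) t)) - cmod (ip D (psi \<sigma> (Suc t)) (psi (sw \<sigma> p) (Suc t)))
    \<le> s * FH t \<sigma> p + FL t (sw \<sigma> p) p / s + FL t \<sigma> p / s + s * FH t (sw \<sigma> p) p"
proof -
  let ?y = "sw \<sigma> p"
  let ?H = "Hs h \<sigma> p" and ?L = "Ls h \<sigma> p"
  let ?a = "ip D (psi \<sigma> t) (psi ?y t)"
  let ?b = "ip D (Or (dist h L \<sigma>) (psi \<sigma> t)) (Or (dist h L ?y) (psi ?y t))"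
  have b: "ip D (psi \<sigma> (Suc t)) (psi ?y (Suc t)) = ?b" using run_ip[OF t] .
  have "cmod (?b - ?a) \<le> 2 * (sqrt (nsq D (Pr n m W ?H (psi \<sigma> t))) * sqrt (nsq D (Pr n m W ?H (psi ?y t))))
      + 2 * (sqrt (nsq D (Pr n m W ?L (psi \<sigma> t))) * sqrt (nsq D (Pr n m W ?L (psi ?y t))))"
    by (rule oracle_step[OF pos HL_disj[OF X P]]) (use agree[OF X P] in blast)
  also have "\<dots> \<le> (s * FH t \<sigma> p + FL t ?y p / s) + (FL t \<sigma> p / s + s * FH t ?y p)"
  proof (rule add_mono)
    show "2 * (sqrt (nsq D (Pr n m W ?H (psi \<sigma> t))) * sqrt (nsq D (Pr n m W ?H (psi ?y t))))
          \<le> s * FH t \<sigma> p + FL t ?y p / s"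
      unfolding FH_def FL_def L_sw by (rule amgm[OF nsq_nonneg nsq_nonneg s])
    have "2 * (sqrt (nsq D (Pr n m W ?L (psi \<sigma> t))) * sqrt (nsq D (Pr n m W ?L (psi ?y t))))
          \<le> (1/s) * nsq D (Pr n m W ?L (psi \<sigma> t)) + nsq D (Pr n m W ?L (psi ?y t)) / (1/s)"
      by (rule amgm[OF nsq_nonneg nsq_nonneg]) (use s in simp)
    thus "2 * (sqrt (nsq D (Pr n m W ?L (psi \<sigma> t))) * sqrt (nsq D (Pr n m W ?L (psi ?y t))))
          \<le> FL t \<sigma> p / s + s * FH t ?y p"
      unfolding FH_def FL_def H_sw by (simp add: mult.commute)
  qed
  finally have "cmod (?b - ?a) \<le> s * FH t \<sigma> p + FL t ?y p / s + FL t \<sigma> p / s + s * FH t ?y p"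
    by simp
  moreover have "cmod ?a - cmod ?b \<le> cmod (?b - ?a)"
    using norm_triangle_ineq2[of ?a ?b] by (simp add: norm_minus_commute)
  ultimately show ?thesis unfolding b by linarith
qed

definition Phi :: "nat \<Rightarrow> real" where
  "Phi t = (\<Sum>\<sigma>\<in>Xs h. \<Sum>p\<in>Prs h. cmod (ip D (psi \<sigma> t) (psi (sw \<sigma> p) t)))"

lemma sumH: "\<sigma> \<in> Xs h \<Longrightarrow> t \<le> T \<Longrightarrow> (\<Sum>p\<in>Prs h. FH t \<sigma> p) \<le> 2 * real h"
  unfolding FH_def
  using count_sum[OF finite_Prs, where F = "Hs h \<sigma>" and B = "2 * h" and D = D and n = n and m = m and W = W and u = "psi \<sigma> t"] countH run_norm by simp

lemma sumL: "\<sigma> \<in> Xs h \<Longrightarrow> t \<le> T \<Longrightarrow> (\<Sum>p\<in>Prs h. FL t \<sigma> p) \<le> 2"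
  unfolding FL_def
  using count_sum[OF finite_Prs, where F = "Ls h \<sigma>" and B = 2 and D = D and n = n and m = m and W = W and u = "psi \<sigma> t"] countL run_norm by simp

lemma Phi_step:
  assumes t: "t < T" and s: "0 < (s::real)"
  shows "Phi t - Phi (Suc t) \<le> real (card (Xs h)) * (4 * s * h + 4 / s)"
proof -
  let ?G = "\<lambda>x p. FL t x p / s + s * FH t x p"
  have "Phi t - Phi (Suc t) = (\<Sum>\<sigma>\<in>Xs h. \<Sum>p\<in>Prs h.
      cmod (ip D (psi \<sigma> t) (psi (sw \<sigma> p) t)) - cmod (ip D (psi \<sigma> (Suc t)) (psi (sw \<sigma> p) (Suc t))))"
    unfolding Phi_def by (simp add: sum_subtractf)
  also have "\<dots> \<le> (\<Sum>\<sigma>\<in>Xs h. \<Sum>p\<in>Prs h. (s * FH t \<sigma> p + FL t \<sigma> p / s) + ?G (sw \<sigma> p) p)"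
    by (intro sum_mono) (use pair_step[OF _ _ t s] in \<open>auto simp: algebra_simps\<close>)
  also have "\<dots> = (\<Sum>\<sigma>\<in>Xs h. \<Sum>p\<in>Prs h. s * FH t \<sigma> p + FL t \<sigma> p / s) + (\<Sum>\<sigma>\<in>Xs h. \<Sum>p\<in>Prs h. ?G (sw \<sigma> p) p)"
    by (simp add: sum.distrib)
  also have "(\<Sum>\<sigma>\<in>Xs h. \<Sum>p\<in>Prs h. ?G (sw \<sigma> p) p) = (\<Sum>\<sigma>\<in>Xs h. \<Sum>p\<in>Prs h. ?G \<sigma> p)"
    by (rule reindex_sw)
  also have "(\<Sum>\<sigma>\<in>Xs h. \<Sum>p\<in>Prs h. s * FH t \<sigma> p + FL t \<sigma> p / s) + (\<Sum>\<sigma>\<in>Xs h. \<Sum>p\<in>Prs h. ?G \<sigma> p)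
     = (\<Sum>\<sigma>\<in>Xs h. 2 * s * (\<Sum>p\<in>Prs h. FH t \<sigma> p) + (2 / s) * (\<Sum>p\<in>Prs h. FL t \<sigma> p))"
    by (simp add: sum.distrib[symmetric] sum_distrib_left sum_divide_distrib algebra_simps)
  also have "\<dots> \<le> (\<Sum>\<sigma>\<in>Xs h. 2 * s * (2 * real h) + (2 / s) * 2)"
    by (intro sum_mono add_mono mult_left_mono) (use sumH sumL t s in auto)
  also have "\<dots> = real (card (Xs h)) * (4 * s * h + 4 / s)" by simp
  finally show ?thesis .
qed

lemma mult_Suc_left_real: "real (Suc t) * (Z::real) = real t * Z + Z"
  by (simp add: algebra_simps)

lemma Phi_tele:
  assumes s: "0 < (s::real)"
  shows "t \<le> T \<Longrightarrow> Phi 0 - Phi t \<le> real t * (real (card (Xs h)) * (4 * s * h + 4 / s))"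
proof (induction t)
  case 0 then show ?case by simp
next
  case (Suc t)
  then have "Phi 0 - Phi t \<le> real t * (real (card (Xs h)) * (4 * s * h + 4 / s))" by simp
  moreover have "Phi t - Phi (Suc t) \<le> real (card (Xs h)) * (4 * s * h + 4 / s)"
    using Phi_step[of t s] Suc.prems s by simp
  moreover have "real (Suc t) * (real (card (Xs h)) * (4 * s * h + 4 / s)) = real t * (real (card (Xs h)) * (4 * s * h + 4 / s)) + (real (card (Xs h)) * (4 * s * h + 4 / s))"
    by (rule mult_Suc_left_real)
  ultimately show ?case by linarith
qed

lemma Phi0: "Phi 0 = real (card (Xs h)) * real (card (Prs h))"
proof -
  have "\<And>\<sigma> p. cmod (ip D (psi \<sigma> 0) (psi (sw \<sigma> p) 0)) = 1"
  proof -
    fix \<sigma> p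
    have "ip D (psi \<sigma> 0) (psi (sw \<sigma> p) 0) = ip D (psi \<sigma> 0) (psi \<sigma> 0)" by simp
    also have "\<dots> = 1" using run_norm[of 0] by (simp add: ip_self)
    finally show "cmod (ip D (psi \<sigma> 0) (psi (sw \<sigma> p) 0)) = 1" by simp
  qed
  thus ?thesis unfolding Phi_def by simp
qed

lemma PhiT:
  assumes bound: "\<And>\<sigma> p. \<sigma> \<in> Xs h \<Longrightarrow> p \<in> Prs h \<Longrightarrow> cmod (ip D (psi \<sigma> T) (psi (sw \<sigma> p) T)) \<le> 19/20"
  shows "Phi T \<le> real (card (Xs h)) * real (card (Prs h)) * (19/20)"
proof -
  have "Phi T \<le> (\<Sum>\<sigma>\<in>Xs h. \<Sum>p\<in>Prs h. 19/20)"
    unfolding Phi_def by (intro sum_mono) (use bound in auto)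
  thus ?thesis by simp
qed

lemma key:
  assumes bound: "\<And>\<sigma> p. \<sigma> \<in> Xs h \<Longrightarrow> p \<in> Prs h \<Longrightarrow> cmod (ip D (psi \<sigma> T) (psi (sw \<sigma> p) T)) \<le> 19/20"
    and s: "0 < (s::real)"
  shows "real (card (Prs h)) \<le> 20 * real T * (4 * s * h + 4 / s)"
proof -
  have cX: "0 < real (card (Xs h))" using finite_Xs id_Xs card_gt_0_iff by fastforce
  define C where "C = 4 * s * h + 4 / s"
  define K where "K = real (card (Xs h))"
  have a: "Phi 0 - Phi T \<le> real T * (K * C)"
    using Phi_tele[OF s, of T] unfolding C_def K_def by simp
  have b: "Phi T \<le> K * real (card (Prs h)) * (19/20)" using PhiT[OF bound] unfolding K_def .
  have "K * (real (card (Prs h)) / 20) \<le> K * (real T * C)"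
    using a b Phi0 unfolding K_def[symmetric] by (simp add: algebra_simps)
  hence "real (card (Xs h)) * (real (card (Prs h)) / 20) \<le> real (card (Xs h)) * (real T * (4 * s * h + 4 / s))"
    unfolding K_def C_def .
  hence "real (card (Prs h)) / 20 \<le> real T * (4 * s * h + 4 / s)"
    using cX by (rule mult_left_le_imp_le)
  thus ?thesis by (simp add: mult_ac)
qed

end


lemma final_arith:
  fixes n h :: nat and T :: real
  assumes h4: "4 \<le> h" and hn: "n \<le> 2 * h + 1"
    and key: "real h * (real h - 1) \<le> 160 * T * sqrt (real h)"
  shows "1 / 1280 * real n powr (3/2) \<le> T"
proof -
  have sh: "0 < sqrt (real h)" using h4 by simp
  have hh: "real h = sqrt (real h) * sqrt (real h)" by simp
  have "sqrt (real h) * (sqrt (real h) * (real h - 1)) \<le> sqrt (real h) * (160 * T)"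
    using key hh by (metis mult.assoc mult.commute)
  hence k: "sqrt (real h) * (real h - 1) \<le> 160 * T"
    using sh by (meson mult_left_le_imp_le)
  have np: "real n powr (3/2) = real n * sqrt (real n)"
  proof (cases "n = 0")
    case True then show ?thesis by simp
  next
    case False
    have "real n powr (3/2) = real n powr (1 + 1/2)" by simp
    also have "\<dots> = real n powr 1 * real n powr (1/2)" by (rule powr_add)
    also have "\<dots> = real n * sqrt (real n)" using False by (simp add: powr_half_sqrt)
    finally show ?thesis .
  qed
  have "n + 4 \<le> 4 * h" using h4 hn by linarith
  hence "real (n + 4) \<le> real (4 * h)" by (simp only: of_nat_le_iff)
  hence a: "real n \<le> 4 * (real h - 1)" by simp
  have b: "sqrt (real n) \<le> 2 * sqrt (real h)"
  proof -
    have "sqrt (real n) \<le> sqrt (4 * real h)" using hn h4 by (intro real_sqrt_le_mono) linarith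
    also have "\<dots> = 2 * sqrt (real h)" by (simp add: real_sqrt_mult)
    finally show ?thesis .
  qed
  have "real n * sqrt (real n) \<le> (4 * (real h - 1)) * (2 * sqrt (real h))"
    by (rule mult_mono[OF a b]) (use h4 in auto)
  also have "\<dots> = 8 * (sqrt (real h) * (real h - 1))" by (simp add: algebra_simps)
  also have "\<dots> \<le> 8 * (160 * T)" using k by linarith
  finally show ?thesis unfolding np by simp
qed

theorem mainTheorem11:
  fixes \<alpha> :: real
  assumes "\<alpha> \<ge> 1"
  shows "\<exists>c>0. \<exists>m0 N. \<forall>n\<ge>N. \<forall>m\<ge>m0. \<forall>W T U out.
           (\<forall>t\<le>T. is_unitary (qdim n m W) (U t)) \<and>
           (\<forall>d. is_metric_bounded n m d \<longrightarrow>
                  success_prob n m W d U T out (estimates \<alpha> n d) \<ge> 2/3)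
           \<longrightarrow> real T \<ge> c * real n powr (3/2)"
proof -
  define L where "L = nat \<lceil>\<alpha>\<rceil> + 1"
  have La: "\<alpha> < real L"
  proof -
    have "0 \<le> \<lceil>\<alpha>\<rceil>" using assms by linarith
    hence "real L = real_of_int \<lceil>\<alpha>\<rceil> + 1" unfolding L_def by simp
    moreover have "\<alpha> \<le> real_of_int \<lceil>\<alpha>\<rceil>" by (rule le_of_int_ceiling)
    ultimately show ?thesis by linarith
  qed
  have L1: "1 \<le> L" unfolding L_def by simp
  have main: "1 / 1280 * real n powr (3/2) \<le> real T"
    if n8: "8 \<le> n" and mL: "L + 1 \<le> m"
      and unit: "\<forall>t\<le>T. is_unitary (qdim n m W) (U t)"
      and succ: "\<forall>d. is_metric_bounded n m d \<longrightarrow> success_prob n m W d U T out (estimates \<alpha> n d) \<ge> 2/3"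
    for n m W T U out
  proof -
    define h where "h = n div 2"
    have h2: "2 * h \<le> n" and hn: "n \<le> 2 * h + 1" and h4: "4 \<le> h" using n8 unfolding h_def by auto
    have met: "\<And>\<sigma>. \<sigma> \<in> Xs h \<Longrightarrow> is_metric_bounded n m (dist h L \<sigma>)"
      using metric h2 L1 mL by simp
    have succ': "\<And>\<sigma>. \<sigma> \<in> Xs h \<Longrightarrow> 2/3 \<le> success_prob n m W (dist h L \<sigma>) U T out (estimates \<alpha> n (dist h L \<sigma>))"
      using succ met by blast
    have Wp: "0 < W"
    proof (rule ccontr)
      assume "\<not> 0 < W"
      hence "qdim n m W = 0" unfolding qdim_def by simp
      hence "success_prob n m W (dist h L id) U T out (estimates \<alpha> n (dist h L id)) = 0"
        unfolding success_prob_def by simp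
      thus False using succ'[OF id_Xs] by simp
    qed
    have pos: "0 < n" "0 < m" "0 < W" using n8 mL Wp by auto
    interpret qalg n m W h L U T using pos unit by unfold_locales auto
    have sp: "success_prob n m W d U T out (estimates \<alpha> n d) =
              (\<Sum>k\<in>{k \<in> {..<D}. estimates \<alpha> n d (out k)}. (cmod (run n m W d U T k))\<^sup>2)" for d
      unfolding success_prob_def sum.inter_filter[OF finite_lessThan] ..
    have bound: "cmod (ip D (psi \<sigma> T) (psi (sw \<sigma> p) T)) \<le> 19/20"
      if X: "\<sigma> \<in> Xs h" and P: "p \<in> Prs h" for \<sigma> p
    proof -
      let ?y = "sw \<sigma> p"
      let ?G = "{k \<in> {..<D}. estimates \<alpha> n (dist h L \<sigma>) (out k)}"
      let ?Gy = "{k \<in> {..<D}. estimates \<alpha> n (dist h L ?y) (out k)}"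
      have su: "2/3 \<le> (\<Sum>k\<in>?G. (cmod (psi \<sigma> T k))\<^sup>2)" using succ'[OF X] sp by simp
      have sy: "2/3 \<le> (\<Sum>k\<in>?Gy. (cmod (psi ?y T k))\<^sup>2)" using succ'[OF sw_perm[OF X P]] sp by simp
      have sub: "?Gy \<subseteq> {..<D} - ?G" using distinct_est[OF X P h2 La] by blast
      have "(\<Sum>k\<in>?Gy. (cmod (psi ?y T k))\<^sup>2) \<le> (\<Sum>k\<in>{..<D} - ?G. (cmod (psi ?y T k))\<^sup>2)"
        by (rule sum_mono2[OF _ sub]) auto
      hence sv: "2/3 \<le> (\<Sum>k\<in>{..<D} - ?G. (cmod (psi ?y T k))\<^sup>2)" using sy by linarith
      show ?thesis
        by (rule final_ip[OF run_norm run_norm _ su sv]) auto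
    qed
    define s where "s = 1 / sqrt (real h)"
    have s: "0 < s" unfolding s_def using h4 by simp
    have k: "real (card (Prs h)) \<le> 20 * real T * (4 * s * h + 4 / s)" by (rule key[OF bound s])
    have "4 * s * h + 4 / s = 8 * sqrt (real h)"
    proof -
      have "s * h = sqrt (real h)" unfolding s_def using h4
        by (metis div_by_0 divide_divide_eq_right nonzero_eq_divide_eq of_nat_0_le_iff
            real_div_sqrt real_sqrt_eq_zero_cancel_iff times_divide_eq_left mult_1)
      moreover have "4 / s = 4 * sqrt (real h)" unfolding s_def by simp
      ultimately show ?thesis by (simp add: mult.assoc)
    qed
    moreover have "real (card (Prs h)) = real h * (real h - 1)"
      unfolding card_Prs using h4 by (simp add: of_nat_diff algebra_simps)
    ultimately have "real h * (real h - 1) \<le> 160 * real T * sqrt (real h)" using k by simp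
    thus ?thesis by (rule final_arith[OF h4 hn])
  qed
  show ?thesis
    apply (rule exI[of _ "1/1280"])
    apply (intro conjI)
     apply simp
    apply (rule exI[of _ "L + 1"])
    apply (rule exI[of _ 8])
    using main by blast
qed


end
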